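(* Let $f$ be a subluminal rotational wave. Then $\sigma(\mathrm{P})$ is contained in the imaginary axis.
   Context: A traveling wave of speed $c$ ($c^2\neq1$) of $u_{tt}-u_{xx}+\sin u=0$ is a real solution $f$ of $(c^2-1)f''+\sin f=0$, with energy $E$ given by $\tfrac12(c^2-1)(f')^2+1-\cos f=E$. It is subluminal rotational if $c^2<1$ and $E<0$. Let $\gamma=1/(c^2-1)$. $\sigma(\mathrm{P})$ is the set of $\lambda\in\mathbb{C}$ for which $p''-2c\gamma\lambda p'+\gamma(\lambda^2+\cos f(z))p=0$ has a nontrivial solution bounded on $\mathbb{R}$. *)

theory Defs
  imports "HOL-Analysis.Analysis"
begin

definition traveling_wave :: "real \<Rightarrow> (real \<Rightarrow> real) \<Rightarrow> bool" where
  "traveling_wave c f \<longleftrightarrow> c\<^sup>2 \<noteq> 1 \<and>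
     (\<exists>f1 f2. \<forall>z. (f has_real_derivative f1 z) (at z) \<and>
                    (f1 has_real_derivative f2 z) (at z) \<and>
                    (c\<^sup>2 - 1) * f2 z + sin (f z) = 0)"

text \<open>Energy density; along a traveling wave it is constant, equal to E.\<close>
definition wave_energy :: "real \<Rightarrow> (real \<Rightarrow> real) \<Rightarrow> real \<Rightarrow> real" where
  "wave_energy c f z = (1/2) * (c\<^sup>2 - 1) * (deriv f z)\<^sup>2 + 1 - cos (f z)"

definition subluminal_rotational :: "real \<Rightarrow> (real \<Rightarrow> real) \<Rightarrow> bool" where
  "subluminal_rotational c f \<longleftrightarrow> traveling_wave c f \<and> c\<^sup>2 < 1 \<and>
     (\<exists>E. E < 0 \<and> (\<forall>z. wave_energy c f z = E))"

definition wave_gamma :: "real \<Rightarrow> real" where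
  "wave_gamma c = 1 / (c\<^sup>2 - 1)"

definition spectrum_P :: "real \<Rightarrow> (real \<Rightarrow> real) \<Rightarrow> complex set" where
  "spectrum_P c f = {l. \<exists>(p::real \<Rightarrow> complex) p1 p2.
     (\<forall>z. (p has_vector_derivative p1 z) (at z) \<and>
          (p1 has_vector_derivative p2 z) (at z) \<and>
          p2 z - 2 * of_real c * of_real (wave_gamma c) * l * p1 z
            + of_real (wave_gamma c) * (l\<^sup>2 + of_real (cos (f z))) * p z = 0) \<and>
     bounded (range p) \<and> (\<exists>z. p z \<noteq> 0)}"

end

theory Submission
  imports Defs
begin

lemma mono_from_deriv:
  fixes H H' :: "real \<Rightarrow> real"
  assumes der: "\<And>t. (H has_real_derivative H' t) (at t)"
    and nn: "\<And>t. H' t \<ge> 0" and ab: "a \<le> b"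
  shows "H a \<le> H b"
proof (cases "a = b")
  case False
  then have "a < b" using ab by simp
  from MVT2[OF this, of H H'] der obtain z where "H b - H a = (b - a) * H' z" by blast
  moreover have "(b - a) * H' z \<ge> 0" using nn ab by simp
  ultimately show ?thesis by simp
qed simp

lemma upper_bound_H:
  fixes H H' d q :: "real \<Rightarrow> real"
  assumes der: "\<And>t. (H has_real_derivative H' t) (at t)"
    and lower: "\<And>t. H' t \<ge> \<alpha> * ((d t)\<^sup>2 + (q t)\<^sup>2)"
    and upper: "\<And>t. \<bar>H t\<bar> \<le> \<beta> * (d t * q t + (q t)\<^sup>2)"
    and d0: "\<And>t. d t \<ge> 0" and q0: "\<And>t. q t \<ge> 0" and qB: "\<And>t. q t \<le> B"
    and ap: "\<alpha> > 0" and bp: "\<beta> > 0" and Bp: "B > 0"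
  shows "H t < 2*\<beta>*B\<^sup>2"
proof (rule ccontr)
  define M where "M = 2*\<beta>*B\<^sup>2"
  have Mp: "M > 0" using bp Bp by (simp add: M_def)
  assume "\<not> H t < 2*\<beta>*B\<^sup>2"
  then have Ht: "H t \<ge> M" by (simp add: M_def)
  have nn: "\<And>s. H' s \<ge> 0"
  proof -
    fix s have "\<alpha> * ((d s)\<^sup>2 + (q s)\<^sup>2) \<ge> 0" using ap by simp
    then show "H' s \<ge> 0" using lower[of s] by linarith
  qed
  have geM: "H s \<ge> M" if "s \<ge> t" for s
    using mono_from_deriv[OF der nn that] Ht by simp
  define \<mu> where "\<mu> = \<alpha> / (4*\<beta>\<^sup>2*B\<^sup>2)"
  have mup: "\<mu> > 0" using ap bp Bp by (simp add: \<mu>_def)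
  have key: "H' s \<ge> \<mu> * (H s)\<^sup>2" if "s \<ge> t" for s
  proof -
    have Hs: "H s \<ge> M" using geM that .
    have "H s \<le> \<beta> * (d s * q s + (q s)\<^sup>2)" using upper[of s] by simp
    also have "\<dots> \<le> \<beta> * (d s * B + B\<^sup>2)"
    proof -
      have "d s * q s \<le> d s * B" using d0 qB by (simp add: mult_left_mono)
      moreover have "(q s)\<^sup>2 \<le> B\<^sup>2" using q0 qB by (simp add: power_mono)
      ultimately show ?thesis using bp by (simp add: mult_left_mono)
    qed
    finally have h1: "H s \<le> \<beta> * B * d s + \<beta> * B\<^sup>2" by (simp add: algebra_simps)
    have "\<beta> * B\<^sup>2 \<le> H s / 2" using Hs by (simp add: M_def)
    then have h2: "H s / 2 \<le> (\<beta> * B) * d s" using h1 by linarith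
    have h3: "0 \<le> H s / 2" using Hs Mp by simp
    have "(H s / 2)\<^sup>2 \<le> ((\<beta> * B) * d s)\<^sup>2" using h2 h3 by (rule power_mono)
    then have "(H s)\<^sup>2 / 4 \<le> (\<beta> * B)\<^sup>2 * (d s)\<^sup>2" by (simp add: power_mult_distrib power_divide)
    then have "(H s)\<^sup>2 / (4 * (\<beta> * B)\<^sup>2) \<le> (d s)\<^sup>2" using bp Bp
      by (simp add: field_simps)
    then have "\<alpha> * ((H s)\<^sup>2 / (4 * (\<beta> * B)\<^sup>2)) \<le> \<alpha> * (d s)\<^sup>2" using ap by (rule mult_left_mono[OF _ less_imp_le])
    moreover have "\<alpha> * (d s)\<^sup>2 \<le> H' s"
      using lower[of s] ap by (smt (verit) mult_left_mono zero_le_power2)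
    ultimately show ?thesis by (simp add: \<mu>_def power_mult_distrib)
  qed
  define T where "T = t + 1/(\<mu>*M) + 1"
  have tT: "t < T" using mup Mp by (simp add: T_def add_pos_pos)
  have dphi: "((\<lambda>s. - inverse (H s)) has_real_derivative H' s / (H s)\<^sup>2) (at s)" if "t \<le> s" for s
  proof -
    have "H s \<noteq> 0" using geM[OF that] Mp by simp
    then show ?thesis
      by (auto intro!: derivative_eq_intros der simp: power2_eq_square field_simps)
  qed
  from MVT2[OF tT, of "\<lambda>s. - inverse (H s)" "\<lambda>s. H' s / (H s)\<^sup>2"] dphi
  obtain z where z: "t < z" "z < T" and eq: "- inverse (H T) - - inverse (H t) = (T - t) * (H' z / (H z)\<^sup>2)"
    by auto
  have Hz: "H z > 0" using geM[of z] z Mp by simp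
  have "H' z / (H z)\<^sup>2 \<ge> \<mu>" using key[of z] z Hz by (simp add: field_simps)
  then have "(T - t) * (H' z / (H z)\<^sup>2) \<ge> (T - t) * \<mu>" using tT by (intro mult_left_mono) auto
  moreover have "(T - t) * \<mu> = 1/M + \<mu>" using mup Mp by (simp add: T_def field_simps)
  moreover have "inverse (H t) \<le> 1/M" using Ht Mp by (simp add: inverse_eq_divide frac_le)
  moreover have "inverse (H T) > 0" using geM[of T] tT Mp by simp
  ultimately show False using eq mup by linarith
qed

lemma pos_false_H:
  fixes H H' d q :: "real \<Rightarrow> real"
  assumes der: "\<And>t. (H has_real_derivative H' t) (at t)"
    and lower: "\<And>t. H' t \<ge> \<alpha> * ((d t)\<^sup>2 + (q t)\<^sup>2)"
    and upper: "\<And>t. \<bar>H t\<bar> \<le> \<beta> * (d t * q t + (q t)\<^sup>2)"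
    and d0: "\<And>t. d t \<ge> 0" and q0: "\<And>t. q t \<ge> 0" and qB: "\<And>t. q t \<le> B"
    and ap: "\<alpha> > 0" and bp: "\<beta> > 0" and Bp: "B > 0" and H1: "H t1 > 0"
  shows False
proof -
  define M where "M = 2*\<beta>*B\<^sup>2"
  have Mp: "M > 0" using bp Bp by (simp add: M_def)
  have ub: "\<And>t. H t < M" unfolding M_def
    by (rule upper_bound_H[OF der lower upper d0 q0 qB ap bp Bp])
  define \<kappa> where "\<kappa> = 2*\<alpha>/(3*\<beta>)"
  have kp: "\<kappa> > 0" using ap bp by (simp add: \<kappa>_def)
  have nn: "\<And>s. H' s \<ge> 0"
  proof -
    fix s have "\<alpha> * ((d s)\<^sup>2 + (q s)\<^sup>2) \<ge> 0" using ap by simp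
    then show "H' s \<ge> 0" using lower[of s] by linarith
  qed
  have kH: "H' s \<ge> \<kappa> * \<bar>H s\<bar>" for s
  proof -
    have "d s * q s \<le> ((d s)\<^sup>2 + (q s)\<^sup>2)/2"
      using sum_squares_ge_zero[of "d s - q s" 0] by (simp add: power2_eq_square algebra_simps)
    then have "d s * q s + (q s)\<^sup>2 \<le> ((d s)\<^sup>2 + (q s)\<^sup>2)/2 + (q s)\<^sup>2" by linarith
    also have "\<dots> \<le> 3/2 * ((d s)\<^sup>2 + (q s)\<^sup>2)" using zero_le_power2[of "d s"] by (simp add: field_simps)
    finally have "d s * q s + (q s)\<^sup>2 \<le> 3/2 * ((d s)\<^sup>2 + (q s)\<^sup>2)" .
    then have "\<bar>H s\<bar> \<le> \<beta> * (3/2 * ((d s)\<^sup>2 + (q s)\<^sup>2))"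
      using upper[of s] bp by (smt (verit) mult_left_mono)
    moreover have "(d s)\<^sup>2 + (q s)\<^sup>2 \<le> H' s / \<alpha>" using lower[of s] ap by (simp add: field_simps)
    then have "\<beta> * (3/2 * ((d s)\<^sup>2 + (q s)\<^sup>2)) \<le> \<beta> * (3/2 * (H' s / \<alpha>))" using bp
      by (intro mult_left_mono) auto
    ultimately have "\<bar>H s\<bar> \<le> \<beta> * (3/2 * (H' s / \<alpha>))" by linarith
    then show ?thesis using ap bp by (simp add: \<kappa>_def field_simps)
  qed
  define \<epsilon> where "\<epsilon> = H t1"
  have ep: "\<epsilon> > 0" using H1 by (simp add: \<epsilon>_def)
  define T where "T = t1 + M/(\<kappa>*\<epsilon>) + 1"
  have tT: "t1 < T" using kp ep Mp by (simp add: T_def add_pos_pos)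
  from MVT2[OF tT, of H H'] der obtain z where z: "t1 < z" "z < T"
    and eq: "H T - H t1 = (T - t1) * H' z" by blast
  have "H z \<ge> \<epsilon>" using mono_from_deriv[OF der nn, of t1 z] z by (simp add: \<epsilon>_def)
  then have "H' z \<ge> \<kappa> * \<epsilon>" using kH[of z] kp ep
    by (smt (verit) mult_left_mono)
  then have "(T - t1) * H' z \<ge> (T - t1) * (\<kappa> * \<epsilon>)" using tT by (intro mult_left_mono) auto
  moreover have "(T - t1) * (\<kappa> * \<epsilon>) = M + \<kappa> * \<epsilon>" using kp ep by (simp add: T_def field_simps)
  ultimately have "H T \<ge> \<epsilon> + M + \<kappa> * \<epsilon>" using eq by (simp add: \<epsilon>_def)
  then show False using ub[of T] kp ep by (smt (verit) mult_pos_pos)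
qed

lemma abstract_false:
  fixes H H' d q :: "real \<Rightarrow> real"
  assumes der: "\<And>t. (H has_real_derivative H' t) (at t)"
    and lower: "\<And>t. H' t \<ge> \<alpha> * ((d t)\<^sup>2 + (q t)\<^sup>2)"
    and upper: "\<And>t. \<bar>H t\<bar> \<le> \<beta> * (d t * q t + (q t)\<^sup>2)"
    and d0: "\<And>t. d t \<ge> 0" and q0: "\<And>t. q t \<ge> 0" and qB: "\<And>t. q t \<le> B"
    and ap: "\<alpha> > 0" and bp: "\<beta> > 0" and Bp: "B > 0" and qt0: "q t0 > 0"
  shows False
proof -
  have "H' t0 > 0"
  proof -
    have "\<alpha> * ((d t0)\<^sup>2 + (q t0)\<^sup>2) > 0" using ap qt0 by (simp add: add_nonneg_pos)
    then show ?thesis using lower[of t0] by linarith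
  qed
  from DERIV_pos_inc_right[OF der this] obtain e where e: "e > 0" "\<And>h. h > 0 \<Longrightarrow> h < e \<Longrightarrow> H t0 < H (t0 + h)"
    by blast
  have h: "e > 0" "H t0 < H (t0 + e/2)" using e by auto
  show False
  proof (cases "H (t0 + e/2) > 0")
    case True
    show False by (rule pos_false_H[OF der lower upper d0 q0 qB ap bp Bp True])
  next
    case False
    then have neg: "H t0 < 0" using h by linarith
    have der2: "((\<lambda>t. - H (- t)) has_real_derivative H' (- t)) (at t)" for t
      using der[of "-t"] by (auto intro!: derivative_eq_intros DERIV_chain2[where f=H])
    show False
      by (rule pos_false_H[of "\<lambda>t. - H (- t)" "\<lambda>t. H' (-t)" \<alpha> "\<lambda>t. d (-t)" "\<lambda>t. q (-t)" \<beta> B "-t0"])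
        (use der2 lower upper d0 q0 qB ap bp Bp neg in auto)
  qed
qed

lemma alg:
  fixes l P P1 :: complex and v c g cf :: real
  shows "Re (cnj l * (((-2* of_real (c*g)*l*P1 + of_real g*(l\<^sup>2 + of_real cf)*P) - of_real (g*cf - v\<^sup>2)*P - of_real v * P1) * cnj P
          + (P1 - of_real v * P) * cnj P1 + of_real (c*g)*l*(P1*cnj P + P*cnj P1)))
       = Re l * ((cmod (P1 - of_real v * P))\<^sup>2 + g*(cmod l)\<^sup>2*(cmod P)\<^sup>2)"
proof -
  obtain x y where l: "l = Complex x y" by (metis complex.exhaust_sel)
  obtain a b where P: "P = Complex a b" by (metis complex.exhaust_sel)
  obtain a1 b1 where P1: "P1 = Complex a1 b1" by (metis complex.exhaust_sel)
  show ?thesis unfolding cmod_power2 l P P1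
    by (simp add: cmod_power2 power2_eq_square algebra_simps)
qed

theorem lemma4p1:
  fixes c :: real and f :: "real \<Rightarrow> real"
  assumes "subluminal_rotational c f"
  shows "\<forall>l\<in>spectrum_P c f. Re l = 0"
proof
  fix l assume lP: "l \<in> spectrum_P c f"
  show "Re l = 0"
  proof (rule ccontr)
    assume xne: "Re l \<noteq> 0"
    from assms obtain f1 f2 E where c1: "c\<^sup>2 < 1" and E: "E < 0" "\<forall>z. wave_energy c f z = E"
      and fd1: "\<And>z. (f has_real_derivative f1 z) (at z)"
      and fd2: "\<And>z. (f1 has_real_derivative f2 z) (at z)"
      and fd3: "\<And>z. (c\<^sup>2 - 1) * f2 z + sin (f z) = 0"
      unfolding subluminal_rotational_def traveling_wave_def by blast
    define g where "g = 1/(1-c\<^sup>2)"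
    have gp: "g > 0" using c1 by (simp add: g_def)
    have f2eq: "f2 z = g * sin (f z)" for z
      using fd3[of z] c1 by (simp add: g_def field_simps)
    have f1ne: "f1 z \<noteq> 0" for z
    proof
      assume f0: "f1 z = 0"
      have "deriv f z = f1 z" by (rule DERIV_imp_deriv[OF fd1])
      then have "1 - cos (f z) = E" using spec[OF E(2), of z] f0 by (simp add: wave_energy_def)
      then show False using E(1) cos_le_one[of "f z"] by linarith
    qed
    define v where "v z = f2 z / f1 z" for z
    have f2der: "(f2 has_real_derivative g * cos (f z) * f1 z) (at z)" for z
    proof -
      have "f2 = (\<lambda>z. g * sin (f z))" using f2eq by auto
      then show ?thesis by (auto intro!: derivative_eq_intros fd1)
    qed
    have vder: "(v has_real_derivative (g * cos (f z) - (v z)\<^sup>2)) (at z)" for z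
    proof -
      have "((\<lambda>z. f2 z / f1 z) has_real_derivative (g * cos (f z) * f1 z * f1 z - f2 z * f2 z) / (f1 z * f1 z)) (at z)"
        using f2der[of z] fd2[of z] f1ne[of z] by (auto intro!: derivative_eq_intros)
      moreover have "(g * cos (f z) * f1 z * f1 z - f2 z * f2 z) / (f1 z * f1 z) = g * cos (f z) - (v z)\<^sup>2"
        using f1ne[of z] by (simp add: v_def field_simps power2_eq_square)
      ultimately show ?thesis by (simp add: v_def[abs_def])
    qed
    from lP obtain p p1 p2 where ode: "\<forall>z. (p has_vector_derivative p1 z) (at z) \<and>
          (p1 has_vector_derivative p2 z) (at z) \<and>
          p2 z - 2 * of_real c * of_real (wave_gamma c) * l * p1 z
            + of_real (wave_gamma c) * (l\<^sup>2 + of_real (cos (f z))) * p z = 0"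
      and bnd: "bounded (range p)" and nz: "\<exists>z. p z \<noteq> 0"
      unfolding spectrum_P_def by blast
    have gam: "wave_gamma c = - g" using c1 by (simp add: wave_gamma_def g_def field_simps)
    have p2eq: "p2 z = -2 * of_real (c*g) * l * p1 z + of_real g * (l\<^sup>2 + of_real (cos (f z))) * p z" for z
    proof -
      have "p2 z + 2 * of_real c * of_real g * l * p1 z - of_real g * (l\<^sup>2 + of_real (cos (f z))) * p z = 0"
        using ode gam by (simp add: algebra_simps)
      then show ?thesis by (simp add: algebra_simps eq_neg_iff_add_eq_0 add_eq_0_iff2 diff_eq_eq)
    qed

    have pd: "(p has_vector_derivative p1 z) (at z)" and p1d: "(p1 has_vector_derivative p2 z) (at z)" for z
      using ode by auto
    define D where "D z = p1 z - of_real (v z) * p z" for z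
    define \<Phi> where "\<Phi> z = cnj l * (D z * cnj (p z) + of_real (c*g) * l * (p z * cnj (p z)))" for z
    define \<Phi>' where "\<Phi>' z = cnj l * ((p2 z - of_real (g * cos (f z) - (v z)\<^sup>2) * p z - of_real (v z) * p1 z) * cnj (p z)
          + (p1 z - of_real (v z) * p z) * cnj (p1 z) + of_real (c*g) * l * (p1 z * cnj (p z) + p z * cnj (p1 z)))" for z
    have \<Phi>der: "(\<Phi> has_vector_derivative \<Phi>' z) (at z)" for z
    proof -
      have vd: "((\<lambda>z. complex_of_real (v z)) has_vector_derivative of_real (g * cos (f z) - (v z)\<^sup>2)) (at z)"
        by (rule has_vector_derivative_of_real[OF vder])
      show ?thesis unfolding \<Phi>_def[abs_def] D_def[abs_def] \<Phi>'_def
        by (rule derivative_eq_intros vd pd p1d refl)+ (simp add: algebra_simps)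
    qed
    define x where "x = Re l"
    define s where "s = sgn x"
    define d where "d z = cmod (D z)" for z
    define q where "q z = cmod (p z)" for z
    define H where "H z = s * Re (\<Phi> z)" for z
    define H' where "H' z = \<bar>x\<bar> * ((d z)\<^sup>2 + g * (cmod l)\<^sup>2 * (q z)\<^sup>2)" for z
    have ReP: "Re (\<Phi>' z) = x * ((d z)\<^sup>2 + g * (cmod l)\<^sup>2 * (q z)\<^sup>2)" for z
      unfolding \<Phi>'_def p2eq d_def D_def q_def x_def by (rule alg)
    have Hder: "(H has_real_derivative H' z) (at z)" for z
    proof -
      have "(H has_real_derivative s * Re (\<Phi>' z)) (at z)"
        unfolding H_def[abs_def] by (auto intro!: derivative_eq_intros \<Phi>der)
      moreover have "s * Re (\<Phi>' z) = H' z" unfolding ReP H'_def s_def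
        by (simp add: abs_sgn mult.assoc[symmetric])
      ultimately show ?thesis by simp
    qed

    obtain B0 where B0: "\<And>z. cmod (p z) \<le> B0"
      using bnd unfolding bounded_iff by auto
    define B where "B = max B0 1"
    have Bp: "B > 0" by (simp add: B_def)
    have qB: "q z \<le> B" for z using B0[of z] by (simp add: q_def B_def)
    have lnz: "cmod l > 0" using xne by (auto simp: x_def)
    define \<alpha> where "\<alpha> = \<bar>x\<bar> * min 1 (g * (cmod l)\<^sup>2)"
    have ap: "\<alpha> > 0" using xne gp lnz by (simp add: \<alpha>_def x_def)
    define \<beta> where "\<beta> = cmod l + \<bar>c\<bar> * g * (cmod l)\<^sup>2 + 1"
    have bp: "\<beta> > 0" using gp by (simp add: \<beta>_def add_nonneg_pos)
    have lower: "H' z \<ge> \<alpha> * ((d z)\<^sup>2 + (q z)\<^sup>2)" for z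
    proof -
      have "min 1 (g * (cmod l)\<^sup>2) * ((d z)\<^sup>2 + (q z)\<^sup>2) \<le> (d z)\<^sup>2 + g * (cmod l)\<^sup>2 * (q z)\<^sup>2"
      proof -
        have "min 1 (g * (cmod l)\<^sup>2) * (d z)\<^sup>2 \<le> (d z)\<^sup>2"
          using mult_right_mono[of "min 1 (g * (cmod l)\<^sup>2)" 1 "(d z)\<^sup>2"] by simp
        moreover have "min 1 (g * (cmod l)\<^sup>2) * (q z)\<^sup>2 \<le> g * (cmod l)\<^sup>2 * (q z)\<^sup>2"
          by (intro mult_right_mono) auto
        ultimately show ?thesis by (simp add: distrib_left)
      qed
      then have "\<bar>x\<bar> * (min 1 (g * (cmod l)\<^sup>2) * ((d z)\<^sup>2 + (q z)\<^sup>2)) \<le> H' z"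
        unfolding H'_def by (intro mult_left_mono) auto
      then show ?thesis by (simp add: \<alpha>_def mult.assoc)
    qed
    have upper: "\<bar>H z\<bar> \<le> \<beta> * (d z * q z + (q z)\<^sup>2)" for z
    proof -
      have "\<bar>H z\<bar> \<le> cmod (\<Phi> z)"
        unfolding H_def s_def by (auto simp: abs_mult sgn_if abs_Re_le_cmod)
      also have "\<dots> \<le> cmod l * (d z * q z + \<bar>c\<bar> * g * cmod l * (q z)\<^sup>2)"
      proof -
        have "cmod (D z * cnj (p z) + of_real (c*g) * l * (p z * cnj (p z)))
              \<le> cmod (D z * cnj (p z)) + cmod (of_real (c*g) * l * (p z * cnj (p z)))"
          by (rule norm_triangle_ineq)
        also have "\<dots> = d z * q z + \<bar>c\<bar> * g * cmod l * (q z)\<^sup>2"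
          using gp by (simp add: d_def q_def norm_mult abs_mult power2_eq_square)
        finally show ?thesis unfolding \<Phi>_def by (simp add: norm_mult mult_left_mono)
      qed
      also have "\<dots> = cmod l * (d z * q z) + (\<bar>c\<bar> * g * (cmod l)\<^sup>2) * (q z)\<^sup>2"
        by (simp add: algebra_simps power2_eq_square)
      also have "\<dots> \<le> \<beta> * (d z * q z) + \<beta> * (q z)\<^sup>2"
      proof (rule add_mono)
        show "cmod l * (d z * q z) \<le> \<beta> * (d z * q z)"
          using gp by (intro mult_right_mono) (auto simp: \<beta>_def d_def q_def)
        show "(\<bar>c\<bar> * g * (cmod l)\<^sup>2) * (q z)\<^sup>2 \<le> \<beta> * (q z)\<^sup>2"
          using gp by (intro mult_right_mono) (auto simp: \<beta>_def)
      qed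
      finally show ?thesis by (simp add: distrib_left)
    qed
    obtain t0 where t0: "p t0 \<noteq> 0" using nz by blast
    show False
      by (rule abstract_false[OF Hder lower upper _ _ qB ap bp Bp, of t0])
        (use t0 in \<open>auto simp: d_def q_def\<close>)
  qed
qed

end
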